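(* Suppose users' budget and utility parameters are drawn i.i.d. from a distribution $\mathcal{D}$. Then there exists a market instance for which the expected constraint violation of the static expected equilibrium pricing algorithm (which posts the price vector $\mathbf{p}^*$ to every user, where $\mathbf{p}^*$ is computed with complete knowledge of $\mathcal{D}$) is $\Omega(\sqrt{n})$.
   Context: Online Fisher market: $m$ divisible goods, good $j$ with capacity $c_j=nd_j$, $d_j>0$; $n$ users arrive sequentially, user $t$ having budget $w_t>0$ and utility vector $\mathbf{u}_t\ge\mathbf{0}$, with $(w_t,\mathbf{u}_t)$ i.i.d. from $\mathcal{D}$ with bounded support. Given price vector $\mathbf{p}^t$, user $t$ consumes an optimal solution $\mathbf{x}_t$ of $\max \mathbf{u}_t^\top\mathbf{x}$ s.t. $(\mathbf{p}^t)^\top\mathbf{x}\le w_t$, $\mathbf{x}\ge\mathbf{0}$. The expected equilibrium price $\mathbf{p}^*$ is an optimal solution of $\min_{\mathbf{p}}\ \sum_{j=1}^m p_jd_j+\mathbb{E}_{(w,\mathbf{u})\sim\mathcal{D}}[w\log w-w\log(\min_{j\in[m]}p_j/u_j)-w]$ (equivalently, the equilibrium prices computed from the expected number of arrivals of each user type). The expected constraint violation is $V_n=\mathbb{E}[\|(\sum_{t=1}^n\mathbf{x}_t-\mathbf{c})_+\|_2]$. Asymptotics are as $n\to\infty$ with the instance fixed. *)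

theory Defs
  imports "HOL-Probability.Probability" "HOL-Library.Landau_Symbols"
begin

(* A user type: (budget w, utility vector u); goods are indexed by j < m. *)
type_synonym utype = "real \<times> (nat \<Rightarrow> real)"

(* Market instance: m goods, capacity per user d_j > 0, distribution D of user types,
   with bounded (here: finite) support, w > 0, u >= 0 and u not identically zero. *)
definition valid_instance :: "nat \<Rightarrow> (nat \<Rightarrow> real) \<Rightarrow> utype pmf \<Rightarrow> bool" where
  "valid_instance m d D \<longleftrightarrow>
     m \<ge> 1 \<and> (\<forall>j<m. d j > 0) \<and> finite (set_pmf D) \<and>
     (\<forall>(w,u)\<in>set_pmf D. w > 0 \<and> (\<forall>j<m. u j \<ge> 0) \<and> (\<exists>j<m. u j > 0))"

(* min_j p_j / u_j, where goods with u_j = 0 contribute +infinity *)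
definition min_ratio :: "nat \<Rightarrow> (nat \<Rightarrow> real) \<Rightarrow> (nat \<Rightarrow> real) \<Rightarrow> real" where
  "min_ratio m p u = Min {p j / u j | j. j < m \<and> u j > 0}"

(* prices at which the objective is finite *)
definition price_domain :: "nat \<Rightarrow> utype pmf \<Rightarrow> (nat \<Rightarrow> real) \<Rightarrow> bool" where
  "price_domain m D p \<longleftrightarrow>
     (\<forall>j<m. p j \<ge> 0) \<and> (\<forall>(w,u)\<in>set_pmf D. min_ratio m p u > 0)"

definition eq_objective :: "nat \<Rightarrow> (nat \<Rightarrow> real) \<Rightarrow> utype pmf \<Rightarrow> (nat \<Rightarrow> real) \<Rightarrow> real" where
  "eq_objective m d D p =
     (\<Sum>j<m. p j * d j) +
     measure_pmf.expectation D (\<lambda>(w,u). w * ln w - w * ln (min_ratio m p u) - w)"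

definition is_eq_price :: "nat \<Rightarrow> (nat \<Rightarrow> real) \<Rightarrow> utype pmf \<Rightarrow> (nat \<Rightarrow> real) \<Rightarrow> bool" where
  "is_eq_price m d D p \<longleftrightarrow> price_domain m D p \<and>
     (\<forall>q. price_domain m D q \<longrightarrow> eq_objective m d D p \<le> eq_objective m d D q)"

definition optimal_bundle :: "nat \<Rightarrow> (nat \<Rightarrow> real) \<Rightarrow> real \<Rightarrow> (nat \<Rightarrow> real) \<Rightarrow> (nat \<Rightarrow> real) \<Rightarrow> bool" where
  "optimal_bundle m p w u x \<longleftrightarrow>
     (\<forall>j<m. x j \<ge> 0) \<and> (\<Sum>j<m. p j * x j) \<le> w \<and>
     (\<forall>y. (\<forall>j<m. y j \<ge> 0) \<and> (\<Sum>j<m. p j * y j) \<le> w \<longrightarrow>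
          (\<Sum>j<m. u j * y j) \<le> (\<Sum>j<m. u j * x j))"

(* Expected constraint violation V_n. X n t \<omega> is the bundle consumed by user t (t < n)
   when the sample of user types is \<omega> (i.i.d. from D over {..<n}). *)
definition violation ::
  "nat \<Rightarrow> (nat \<Rightarrow> real) \<Rightarrow> utype pmf \<Rightarrow> (nat \<Rightarrow> nat \<Rightarrow> (nat \<Rightarrow> utype) \<Rightarrow> nat \<Rightarrow> real) \<Rightarrow> nat \<Rightarrow> real" where
  "violation m d D X n =
     measure_pmf.expectation (Pi_pmf {..<n} undefined (\<lambda>_. D))
       (\<lambda>\<omega>. sqrt (\<Sum>j<m. (max 0 ((\<Sum>t<n. X n t \<omega> j) - real n * d j))\<^sup>2))"

end

theory Submission
  imports Defs
begin

definition D0 :: "utype pmf" where "D0 = pmf_of_set {(1, \<lambda>_. 1), (3, \<lambda>_. 1)}"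

lemma setD0: "set_pmf D0 = {(1, \<lambda>_. 1), (3, \<lambda>_. 1)}"
  unfolding D0_def by (subst set_pmf_of_set) auto

lemma pmfD0: "x \<in> set_pmf D0 \<Longrightarrow> pmf D0 x = 1/2"
  unfolding D0_def by (subst pmf_of_set) (auto simp: setD0[unfolded D0_def])

lemma finP: "finite (set_pmf (Pi_pmf {..<(n::nat)} undefined (\<lambda>_. D0)))"
  by (subst set_Pi_pmf) (auto simp: setD0 intro!: finite_PiE_dflt)

lemma suppP: "\<omega> \<in> set_pmf (Pi_pmf {..<(n::nat)} undefined (\<lambda>_. D0)) \<Longrightarrow> t < n \<Longrightarrow> \<omega> t \<in> set_pmf D0"
  by (subst (asm) set_Pi_pmf) (auto simp: PiE_dflt_def)

lemma step:
  fixes g :: "(nat \<Rightarrow> utype) \<Rightarrow> real"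
  shows "measure_pmf.expectation (Pi_pmf {..<Suc n} undefined (\<lambda>_. D0)) g =
    (measure_pmf.expectation (Pi_pmf {..<n} undefined (\<lambda>_. D0)) (\<lambda>f. g (f(n := (1, \<lambda>_. 1))))
   + measure_pmf.expectation (Pi_pmf {..<n} undefined (\<lambda>_. D0)) (\<lambda>f. g (f(n := (3, \<lambda>_. 1))))) / 2"
proof -
  let ?P = "Pi_pmf {..<n} undefined (\<lambda>_. D0)"
  have "Pi_pmf {..<Suc n} undefined (\<lambda>_. D0) = Pi_pmf (insert n {..<n}) undefined (\<lambda>_. D0)"
    by (simp add: lessThan_Suc)
  also have "\<dots> = bind_pmf D0 (\<lambda>y. map_pmf (\<lambda>f. f(n := y)) ?P)"
    by (subst Pi_pmf_insert') (auto simp: map_pmf_def)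
  finally have eq: "Pi_pmf {..<Suc n} undefined (\<lambda>_. D0) = bind_pmf D0 (\<lambda>y. map_pmf (\<lambda>f. f(n := y)) ?P)" .
  have "measure_pmf.expectation (Pi_pmf {..<Suc n} undefined (\<lambda>_. D0)) g =
     (\<Sum>a\<in>set_pmf D0. pmf D0 a *\<^sub>R measure_pmf.expectation (map_pmf (\<lambda>f. f(n := a)) ?P) g)"
    unfolding eq by (rule pmf_expectation_bind) (auto simp: setD0 finP)
  also have "\<dots> = (\<Sum>a\<in>set_pmf D0. (1/2) * measure_pmf.expectation ?P (\<lambda>f. g (f(n := a))))"
    by (intro sum.cong refl) (simp add: pmfD0)
  show ?thesis using calculation by (simp add: setD0 pmfD0)
qed


definition S :: "nat \<Rightarrow> (nat \<Rightarrow> utype) \<Rightarrow> real" where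
  "S n f = (\<Sum>t<n. (fst (f t) - 2))"

abbreviation E :: "nat \<Rightarrow> ((nat \<Rightarrow> utype) \<Rightarrow> real) \<Rightarrow> real" where
  "E n g \<equiv> measure_pmf.expectation (Pi_pmf {..<n} undefined (\<lambda>_. D0)) g"

lemma S_upd: "S (Suc n) (f(n := a)) = S n f + fst a - 2"
proof -
  have "S n (f(n := a)) = S n f" unfolding S_def by (intro sum.cong) auto
  thus ?thesis by (simp add: S_def)
qed

lemma intP: "integrable (measure_pmf (Pi_pmf {..<(n::nat)} undefined (\<lambda>_. D0))) (g :: _ \<Rightarrow> real)"
  by (rule integrable_measure_pmf_finite[OF finP])

lemma step2: "E (Suc n) (\<lambda>f. h (S (Suc n) f)) = E n (\<lambda>f. (h (S n f - 1) + h (S n f + 1)) / 2)"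
  by (simp add: step S_upd intP) (simp add: add.commute)

lemma m1: "E n (\<lambda>f. S n f) = 0"
proof (induction n)
  case 0 show ?case by (simp add: S_def)
next
  case (Suc n)
  have "E (Suc n) (\<lambda>f. S (Suc n) f) = E n (\<lambda>f. ((S n f - 1) + (S n f + 1)) / 2)"
    using step2[of n "\<lambda>x. x"] by simp
  also have "\<dots> = E n (\<lambda>f. S n f)" by simp
  finally show ?case using Suc by simp
qed

lemma m2: "E n (\<lambda>f. (S n f)^2) = real n"
proof (induction n)
  case 0 show ?case by (simp add: S_def)
next
  case (Suc n)
  have "E (Suc n) (\<lambda>f. (S (Suc n) f)^2) = E n (\<lambda>f. ((S n f - 1)^2 + (S n f + 1)^2) / 2)"
    using step2[of n "\<lambda>x. x^2"] by simp
  also have "\<dots> = E n (\<lambda>f. (S n f)^2 + 1)"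
    by (intro Bochner_Integration.integral_cong refl) (simp add: power2_eq_square algebra_simps)
  also have "\<dots> = E n (\<lambda>f. (S n f)^2) + 1" by (simp add: intP)
  finally show ?case using Suc by simp
qed

lemma m4: "E n (\<lambda>f. (S n f)^4) = 3 * real n ^ 2 - 2 * real n"
proof (induction n)
  case 0 show ?case by (simp add: S_def)
next
  case (Suc n)
  have "E (Suc n) (\<lambda>f. (S (Suc n) f)^4) = E n (\<lambda>f. ((S n f - 1)^4 + (S n f + 1)^4) / 2)"
    using step2[of n "\<lambda>x. x^4"] by simp
  also have "\<dots> = E n (\<lambda>f. (S n f)^4 + 6 * (S n f)^2 + 1)"
    by (intro Bochner_Integration.integral_cong refl) (simp add: power_def algebra_simps numeral_eq_Suc)
  also have "\<dots> = E n (\<lambda>f. (S n f)^4) + 6 * E n (\<lambda>f. (S n f)^2) + 1" by (simp add: intP)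
  finally show ?case using Suc m2 by (simp add: algebra_simps power2_eq_square)
qed

lemma ptwise:
  fixes x t :: real assumes t: "t > 0"
  shows "max 0 x \<ge> x / 2 + x^2 / (2 * t) - x^4 / (8 * t^3)"
proof -
  define a where "a = \<bar>x\<bar>"
  have a: "a \<ge> 0" unfolding a_def by simp
  have "a^4 - 4*t^2*a^2 + 4*t^3*a = a * (a * (a - 2*t)^2 + 4*t*(a-t)^2)"
    by (simp add: power_def numeral_eq_Suc algebra_simps)
  also have "\<dots> \<ge> 0" using a t by (intro mult_nonneg_nonneg add_nonneg_nonneg) auto
  finally have "a^4 - 4*t^2*a^2 + 4*t^3*a \<ge> 0" .
  hence "a \<ge> a^2 / t - a^4 / (4 * t^3)" using t
    by (simp add: field_simps power_def numeral_eq_Suc)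
  moreover have "a^2 = x^2" "a^4 = x^4" unfolding a_def by (simp_all add: power_even_abs)
  moreover have "max 0 x = (a + x) / 2" unfolding a_def by (simp add: max_def abs_if)
  ultimately show ?thesis by (simp add: field_simps)
qed

lemma lower: assumes "n \<ge> 1" shows "E n (\<lambda>f. max 0 (S n f)) \<ge> sqrt (real n) / 8"
proof -
  define t where "t = sqrt (real n)"
  have t: "t > 0" using assms unfolding t_def by simp
  have n: "real n = t^2" unfolding t_def by simp
  have "E n (\<lambda>f. max 0 (S n f)) \<ge> E n (\<lambda>f. S n f / 2 + (S n f)^2 / (2 * t) - (S n f)^4 / (8 * t^3))"
    by (intro integral_mono intP ptwise t)
  also have "E n (\<lambda>f. S n f / 2 + (S n f)^2 / (2 * t) - (S n f)^4 / (8 * t^3))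
     = E n (\<lambda>f. S n f) / 2 + E n (\<lambda>f. (S n f)^2) / (2 * t) - E n (\<lambda>f. (S n f)^4) / (8 * t^3)"
    by (simp add: intP)
  also have "\<dots> = t^2 / (2*t) - (3 * t^4 - 2 * t^2) / (8 * t^3)"
    unfolding m1 m2 m4 n by (simp add: power_def numeral_eq_Suc)
  also have "\<dots> = t / 8 + 1 / (4 * t)" using t by (simp add: field_simps power_def numeral_eq_Suc)
  finally show ?thesis unfolding t_def[symmetric] using t by (smt (verit) divide_pos_pos)
qed


lemma minr: "min_ratio (Suc 0) q (\<lambda>_. 1) = q 0"
proof -
  have "{q j / (\<lambda>_. 1::real) j | j. j < Suc 0 \<and> (\<lambda>_. 1::real) j > 0} = {q 0}" by auto
  thus ?thesis unfolding min_ratio_def by simp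
qed

lemma pdom: "price_domain 1 D0 q \<longleftrightarrow> q 0 > 0"
  unfolding price_domain_def by (auto simp: setD0 minr)

lemma obj: "eq_objective 1 (\<lambda>_. 2) D0 q = 2 * q 0 + (3 * ln 3 - 4) / 2 - 2 * ln (q 0)"
  unfolding eq_objective_def D0_def
  by (subst integral_pmf_of_set) (auto simp: minr field_simps)

lemma eqp: "is_eq_price 1 (\<lambda>_. 2) D0 (\<lambda>_. 1)"
  unfolding is_eq_price_def pdom obj
proof (intro conjI allI impI)
  fix q :: "nat \<Rightarrow> real" assume "q 0 > 0"
  then have "ln (q 0) \<le> q 0 - 1" by (rule ln_le_minus_one)
  then show "2 * 1 + (3 * ln 3 - 4) / 2 - 2 * ln 1 \<le> 2 * q 0 + (3 * ln 3 - 4) / 2 - 2 * ln (q 0)"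
    by simp
qed simp

lemma eqp_unique: assumes "is_eq_price 1 (\<lambda>_. 2) D0 p" shows "p 0 = 1"
proof -
  have p: "p 0 > 0" using assms unfolding is_eq_price_def pdom by simp
  have "2 * p 0 - 2 * ln (p 0) \<le> 2"
    using assms unfolding is_eq_price_def pdom obj by (auto dest!: spec[of _ "\<lambda>_. 1"])
  define r where "r = sqrt (p 0)"
  have r: "r > 0" "p 0 = r^2" using p unfolding r_def by auto
  have "ln (p 0) = 2 * ln r" using r by (simp add: ln_realpow)
  moreover have "ln r \<le> r - 1" using r by (intro ln_le_minus_one) 
  ultimately have "(r - 1)^2 \<le> 0" using \<open>2 * p 0 - 2 * ln (p 0) \<le> 2\<close> r
    by (simp add: power2_eq_square algebra_simps)
  hence "r = 1" by simp
  thus ?thesis using r by simp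
qed

lemma optb: assumes "optimal_bundle 1 p w u x" "p 0 = 1" "w > 0" "u 0 = 1"
  shows "x 0 = w"
proof -
  have "x 0 \<le> w" using assms unfolding optimal_bundle_def by simp
  moreover have "w \<le> x 0" using assms unfolding optimal_bundle_def
    by (auto dest!: spec[of _ "\<lambda>_. w"])
  ultimately show ?thesis by simp
qed

lemma viol:
  assumes "\<And>t \<omega>. t < n \<Longrightarrow> \<omega> t \<in> set_pmf D0 \<Longrightarrow> X n t \<omega> 0 = fst (\<omega> t)"
  shows "violation 1 (\<lambda>_. 2) D0 X n = E n (\<lambda>f. max 0 (S n f))"
  unfolding violation_def
proof (intro integral_cong_AE)
  show "AE \<omega> in measure_pmf (Pi_pmf {..<n} undefined (\<lambda>_. D0)).
     sqrt (\<Sum>j<1. (max 0 ((\<Sum>t<n. X n t \<omega> j) - real n * 2))\<^sup>2) = max 0 (S n \<omega>)"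
  proof (rule AE_pmfI)
    fix \<omega> assume w: "\<omega> \<in> set_pmf (Pi_pmf {..<n} undefined (\<lambda>_. D0))"
    have "(\<Sum>t<n. X n t \<omega> 0) - real n * 2 = (\<Sum>t<n. fst (\<omega> t) - 2)"
      using assms suppP[OF w] by (simp add: sum_subtractf)
    thus "sqrt (\<Sum>j<1. (max 0 ((\<Sum>t<n. X n t \<omega> j) - real n * 2))\<^sup>2) = max 0 (S n \<omega>)"
      by (simp add: S_def)
  qed
qed auto

theorem corollary1:
  shows "\<exists>(m::nat) (d::nat \<Rightarrow> real) (D::utype pmf).
     valid_instance m d D \<and> (\<exists>p. is_eq_price m d D p) \<and>
     (\<forall>p X. is_eq_price m d D p \<longrightarrow>
        (\<forall>n t \<omega>. t < n \<longrightarrow> \<omega> t \<in> set_pmf D \<longrightarrow>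
            optimal_bundle m p (fst (\<omega> t)) (snd (\<omega> t)) (X n t \<omega>)) \<longrightarrow>
        (\<lambda>n. violation m d D X n) \<in> \<Omega>(\<lambda>n. sqrt (real n)))"
proof (intro exI conjI allI impI)
  show "valid_instance 1 (\<lambda>_. 2) D0" unfolding valid_instance_def by (auto simp: setD0)
  show "is_eq_price 1 (\<lambda>_. 2) D0 (\<lambda>_. 1)" by (rule eqp)
  fix p and X :: "nat \<Rightarrow> nat \<Rightarrow> (nat \<Rightarrow> utype) \<Rightarrow> nat \<Rightarrow> real" assume p: "is_eq_price 1 (\<lambda>_. 2) D0 p"
    and X: "\<forall>n t \<omega>. t < n \<longrightarrow> \<omega> t \<in> set_pmf D0 \<longrightarrow>
            optimal_bundle 1 p (fst (\<omega> t)) (snd (\<omega> t)) (X n t \<omega>)"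
  have p0: "p 0 = 1" by (rule eqp_unique[OF p])
  have V: "violation 1 (\<lambda>_. 2) D0 X n = E n (\<lambda>f. max 0 (S n f))" for n :: nat
  proof (rule viol)
    fix t \<omega> assume "t < n" "\<omega> t \<in> set_pmf D0"
    moreover from this have "fst (\<omega> t) > 0" "snd (\<omega> t) 0 = 1" by (auto simp: setD0)
    ultimately show "X n t \<omega> 0 = fst (\<omega> t)" using X p0 optb by blast
  qed
  show "(\<lambda>n. violation 1 (\<lambda>_. 2) D0 X n) \<in> \<Omega>(\<lambda>n. sqrt (real n))"
  proof (rule landau_omega.bigI[of "1/8"])
    show "eventually (\<lambda>n. norm (violation 1 (\<lambda>_. 2) D0 X n) \<ge> 1/8 * norm (sqrt (real n))) at_top"
      using eventually_ge_at_top[of "1::nat"]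
    proof eventually_elim
      case (elim n)
      have "sqrt (real n) / 8 \<le> violation 1 (\<lambda>_. 2) D0 X n" using lower[OF elim] V by simp
      moreover have "sqrt (real n) \<ge> 0" by simp
      ultimately show ?case by simp
    qed
  qed simp
qed

end
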